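(* Algorithm 1 requires $\widetilde{O}(m n^{1/\alpha}/\varepsilon + n)$ space with probability at least $1-1/m^2$.
   Context: Algorithm 1. Input: a stream of sets $S_1,\dots,S_m\subseteq[n]$, an integer $\alpha\ge1$, a parameter $\varepsilon>0$, and a number $\widetilde{\mathrm{opt}}$ with $\mathrm{opt}\le\widetilde{\mathrm{opt}}\le(1+\varepsilon)\mathrm{opt}$, where $\mathrm{opt}$ is the minimum number of input sets covering $[n]$. (1) Set $U\leftarrow[n]$, $\mathrm{SOL}\leftarrow\emptyset$. (2) In one pass, for each $S_i$ with $|S_i\cap U|\ge n/(\varepsilon\,\widetilde{\mathrm{opt}})$: add $i$ to $\mathrm{SOL}$ and set $U\leftarrow U\setminus S_i$. (3) For $j=1,\dots,\alpha$: (a) let $U_{\mathrm{smpl}}\subseteq U$ contain each element of $U$ independently with probability $p=16\,\widetilde{\mathrm{opt}}\log m/n^{1-1/\alpha}$; (b) in one pass, store $S'_i=S_i\cap U_{\mathrm{smpl}}$ for all $i\in[m]$; (c) compute an optimal set cover $\mathrm{OPT}'$ of the instance $(S'_1,\dots,S'_m)$ on universe $U_{\mathrm{smpl}}$ and add its indices to $\mathrm{SOL}$; (d) in another pass, set $U\leftarrow U\setminus\bigcup_{i\in\mathrm{OPT}'}S_i$. (4) Return $\mathrm{SOL}$. Space is in bits; $\widetilde{O}$ hides polylogarithmic factors in $n,m$. *)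

theory Defs
  imports "HOL-Probability.Probability"
begin

text \<open>Set cover instances: universe [n] = {1..n}, sets S 1, ..., S m (indices {1..m}).\<close>

definition covers :: "(nat \<Rightarrow> nat set) \<Rightarrow> nat set \<Rightarrow> nat set \<Rightarrow> bool" where
  "covers S I V \<longleftrightarrow> V \<subseteq> (\<Union>i\<in>I. S i)"

definition opt_cover :: "nat \<Rightarrow> nat \<Rightarrow> (nat \<Rightarrow> nat set) \<Rightarrow> nat" where
  "opt_cover n m S = Min {card I | I. I \<subseteq> {1..m} \<and> covers S I {1..n}}"

definition is_opt_cover :: "nat \<Rightarrow> (nat \<Rightarrow> nat set) \<Rightarrow> nat set \<Rightarrow> nat set \<Rightarrow> bool" where
  "is_opt_cover m T V I \<longleftrightarrow> I \<subseteq> {1..m} \<and> covers T I V \<and>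
     (\<forall>J. J \<subseteq> {1..m} \<and> covers T J V \<longrightarrow> card I \<le> card J)"

text \<open>An (arbitrary, deterministic) exact set-cover subroutine used in step (3c).\<close>
definition opt_oracle :: "nat \<Rightarrow> ((nat \<Rightarrow> nat set) \<Rightarrow> nat set \<Rightarrow> nat set) \<Rightarrow> bool" where
  "opt_oracle m oc \<longleftrightarrow> (\<forall>T V. covers T {1..m} V \<longrightarrow> is_opt_cover m T V (oc T V))"

definition sample_set :: "nat set \<Rightarrow> real \<Rightarrow> nat set pmf" where
  "sample_set U q = map_pmf (\<lambda>f. {x\<in>U. f x}) (Pi_pmf U False (\<lambda>_. bernoulli_pmf q))"

definition wlen :: "nat \<Rightarrow> nat" where
  "wlen k = nat \<lceil>log 2 (real k + 1)\<rceil>"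

definition step2 :: "nat \<Rightarrow> nat \<Rightarrow> (nat \<Rightarrow> nat set) \<Rightarrow> real \<Rightarrow> nat set \<times> nat set" where
  "step2 n m S thr = foldl (\<lambda>(U, SOL) i. if real (card (S i \<inter> U)) \<ge> thr
                                         then (U - S i, insert i SOL) else (U, SOL))
                      ({1..n}, {}) [1..<m+1]"

text \<open>Memory (bits) while in step (2) with current solution SOL: bit vector of U plus indices.\<close>
definition space_step2 :: "nat \<Rightarrow> nat \<Rightarrow> nat set \<Rightarrow> nat" where
  "space_step2 n m SOL = n + card SOL * wlen m"

text \<open>Memory (bits) in an iteration of step (3): bit vectors of U and U_smpl, the indices in SOL,
  and the stored sets S'_i (as lists of elements, with a delimiter per set).\<close>
definition space_iter :: "nat \<Rightarrow> nat \<Rightarrow> nat set \<Rightarrow> (nat \<Rightarrow> nat set) \<Rightarrow> nat" where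
  "space_iter n m SOL T = 2 * n + card SOL * wlen m + (\<Sum>i=1..m. card (T i) + 1) * wlen n"

text \<open>State: (U, SOL, peak space so far). One iteration (3a)-(3d) with sampling probability q.\<close>
definition iter_step :: "nat \<Rightarrow> nat \<Rightarrow> (nat \<Rightarrow> nat set) \<Rightarrow> real \<Rightarrow>
    ((nat \<Rightarrow> nat set) \<Rightarrow> nat set \<Rightarrow> nat set) \<Rightarrow> nat set \<times> nat set \<times> nat \<Rightarrow>
    (nat set \<times> nat set \<times> nat) pmf" where
  "iter_step n m S q oc st = (case st of (U, SOL, sp) \<Rightarrow>
     bind_pmf (sample_set U q) (\<lambda>Us.
       let T = (\<lambda>i. S i \<inter> Us); Opt = oc T Us; SOL' = SOL \<union> Opt
       in return_pmf (U - (\<Union>i\<in>Opt. S i), SOL', max sp (space_iter n m SOL' T))))"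

primrec run_iters :: "nat \<Rightarrow> nat \<Rightarrow> (nat \<Rightarrow> nat set) \<Rightarrow> real \<Rightarrow>
    ((nat \<Rightarrow> nat set) \<Rightarrow> nat set \<Rightarrow> nat set) \<Rightarrow> nat \<Rightarrow> nat set \<times> nat set \<times> nat \<Rightarrow>
    (nat set \<times> nat set \<times> nat) pmf" where
  "run_iters n m S q oc 0 st = return_pmf st"
| "run_iters n m S q oc (Suc j) st = bind_pmf (run_iters n m S q oc j st) (iter_step n m S q oc)"

definition alg1_space :: "nat \<Rightarrow> nat \<Rightarrow> (nat \<Rightarrow> nat set) \<Rightarrow> nat \<Rightarrow> real \<Rightarrow> real \<Rightarrow>
    ((nat \<Rightarrow> nat set) \<Rightarrow> nat set \<Rightarrow> nat set) \<Rightarrow> nat pmf" where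
  "alg1_space n m S \<alpha> \<epsilon> optt oc =
     (let (U0, SOL0) = step2 n m S (real n / (\<epsilon> * optt));
          p = 16 * optt * log 2 (real m) / (real n powr (1 - 1 / real \<alpha>));
          q = min 1 (max 0 p)
      in map_pmf (\<lambda>(U, SOL, sp). sp)
           (run_iters n m S q oc \<alpha> (U0, SOL0, space_step2 n m SOL0)))"

end

theory Submission
  imports Defs
begin


lemma sample_set_finite:
  assumes "finite U" shows "finite (set_pmf (sample_set U q))"
proof -
  have "set_pmf (sample_set U q) \<subseteq> Pow U" unfolding sample_set_def by auto
  thus ?thesis using assms by (meson finite_Pow_iff finite_subset)
qed

lemma sample_set_subset:
  "Us \<in> set_pmf (sample_set U q) \<Longrightarrow> Us \<subseteq> U"
  unfolding sample_set_def by auto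

lemma sample_exp:
  fixes w :: "nat \<Rightarrow> real"
  assumes U: "finite U" and q: "0 \<le> q" "q \<le> 1" and w: "\<And>x. 0 \<le> w x" "\<And>x. w x \<le> 1/2"
  shows "measure_pmf.expectation (sample_set U q) (\<lambda>Us. exp (\<Sum>x\<in>Us. w x))
         \<le> exp (2 * q * (\<Sum>x\<in>U. w x))"
proof -
  have eq1: "exp (\<Sum>x\<in>{x\<in>U. f x}. w x) = (\<Prod>x\<in>U. (\<lambda>x b. if b then exp (w x) else 1) x (f x))" for f :: "nat \<Rightarrow> bool"
    using U by (simp add: exp_sum prod.inter_filter)
  have "measure_pmf.expectation (sample_set U q) (\<lambda>Us. exp (\<Sum>x\<in>Us. w x))
      = measure_pmf.expectation (Pi_pmf U False (\<lambda>_. bernoulli_pmf q))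
          (\<lambda>f. \<Prod>x\<in>U. (\<lambda>x b. if b then exp (w x) else 1) x (f x))"
    unfolding sample_set_def by (simp only: integral_map_pmf eq1)
  also have "\<dots> = (\<Prod>x\<in>U. measure_pmf.expectation (bernoulli_pmf q) (\<lambda>b. if b then exp (w x) else 1))"
    by (rule expectation_prod_Pi_pmf) (auto simp: U integrable_measure_pmf_finite)
  also have "\<dots> = (\<Prod>x\<in>U. 1 + q * (exp (w x) - 1))"
    using q by (simp add: algebra_simps)
  also have "\<dots> \<le> (\<Prod>x\<in>U. exp (2 * q * w x))"
  proof (rule prod_mono, safe)
    fix x assume "x \<in> U"
    have e: "exp (w x) \<le> 1 + 2 * w x"
      using exp_bound_lemma[of "w x"] w[of x] by simp
    have "0 \<le> exp (w x) - 1" using w[of x] by simp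
    thus "0 \<le> 1 + q * (exp (w x) - 1)" using q by simp
    have "1 + q * (exp (w x) - 1) \<le> 1 + q * (2 * w x)"
      using e q by (intro add_left_mono mult_left_mono) auto
    also have "\<dots> \<le> exp (2 * q * w x)" using exp_ge_add_one_self[of "2 * q * w x"] by (simp add: algebra_simps)
    finally show "1 + q * (exp (w x) - 1) \<le> exp (2 * q * w x)" .
  qed
  also have "\<dots> = exp (2 * q * (\<Sum>x\<in>U. w x))"
    using U by (simp add: exp_sum sum_distrib_left)
  finally show ?thesis .
qed

lemma sample_mean:
  fixes w :: "nat \<Rightarrow> real"
  assumes U: "finite U" and q: "0 \<le> q" "q \<le> 1"
  shows "measure_pmf.expectation (sample_set U q) (\<lambda>Us. \<Sum>x\<in>Us. w x) = q * (\<Sum>x\<in>U. w x)"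
proof -
  have eq1: "(\<Sum>x\<in>{x\<in>U. f x}. w x) = (\<Sum>x\<in>U. (if f x then w x else 0))" for f :: "nat \<Rightarrow> bool"
    using U by (simp add: sum.inter_filter)
  have "measure_pmf.expectation (sample_set U q) (\<lambda>Us. \<Sum>x\<in>Us. w x)
      = measure_pmf.expectation (Pi_pmf U False (\<lambda>_. bernoulli_pmf q)) (\<lambda>f. \<Sum>x\<in>U. (if f x then w x else 0))"
    unfolding sample_set_def by (simp only: integral_map_pmf eq1)
  also have "\<dots> = (\<Sum>x\<in>U. measure_pmf.expectation (Pi_pmf U False (\<lambda>_. bernoulli_pmf q)) (\<lambda>f. if f x then w x else 0))"
    by (rule Bochner_Integration.integral_sum) (auto intro!: integrable_measure_pmf_finite finite_PiE_dflt simp: U set_Pi_pmf)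
  also have "\<dots> = (\<Sum>x\<in>U. measure_pmf.expectation (map_pmf (\<lambda>f. f x) (Pi_pmf U False (\<lambda>_. bernoulli_pmf q))) (\<lambda>b. if b then w x else 0))"
    by simp
  also have "\<dots> = (\<Sum>x\<in>U. q * w x)"
    using U q by (intro sum.cong refl) (simp add: Pi_pmf_component)
  finally show ?thesis by (simp add: sum_distrib_left)
qed




lemma foldl_step2_inv:
  fixes thr :: real
  assumes "finite U"
  shows "foldl (\<lambda>(U, SOL) i. if real (card (S i \<inter> U)) \<ge> thr
                 then (U - S i, insert i SOL) else (U, SOL)) (U, SOL) xs = (U', SOL')
    \<Longrightarrow> U' \<subseteq> U \<and> SOL' \<subseteq> SOL \<union> set xs \<and> (\<forall>i\<in>set xs. real (card (S i \<inter> U')) \<le> max 0 thr)"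
  using assms
proof (induction xs arbitrary: U SOL)
  case Nil
  then show ?case by simp
next
  case (Cons x xs)
  define U1 where "U1 = (if real (card (S x \<inter> U)) \<ge> thr then U - S x else U)"
  define SOL1 where "SOL1 = (if real (card (S x \<inter> U)) \<ge> thr then insert x SOL else SOL)"
  have st: "(\<lambda>(U, SOL) i. if real (card (S i \<inter> U)) \<ge> thr
                 then (U - S i, insert i SOL) else (U, SOL)) (U, SOL) x = (U1, SOL1)"
    by (simp add: U1_def SOL1_def)
  have f1: "finite U1" using Cons.prems(2) by (simp add: U1_def)
  have IH: "U' \<subseteq> U1 \<and> SOL' \<subseteq> SOL1 \<union> set xs \<and> (\<forall>i\<in>set xs. real (card (S i \<inter> U')) \<le> max 0 thr)"
    using Cons.IH[OF _ f1] Cons.prems(1) st by simp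
  have "U1 \<subseteq> U" by (auto simp: U1_def)
  have x1: "real (card (S x \<inter> U1)) \<le> max 0 thr"
    by (auto simp: U1_def)
  have "card (S x \<inter> U') \<le> card (S x \<inter> U1)"
    using IH f1 by (intro card_mono) auto
  hence "real (card (S x \<inter> U')) \<le> max 0 thr" using x1 by linarith
  then show ?case using IH \<open>U1 \<subseteq> U\<close> by (auto simp: SOL1_def split: if_splits)
qed

lemma step2_inv:
  assumes "step2 n m S thr = (U0, SOL0)"
  shows "U0 \<subseteq> {1..n} \<and> SOL0 \<subseteq> {1..m} \<and> (\<forall>i\<in>{1..m}. real (card (S i \<inter> U0)) \<le> max 0 thr)"
proof -
  have "set [1..<m+1] = {1..m}" by auto
  thus ?thesis using foldl_step2_inv[where U="{1..n}" and S=S and thr=thr and SOL="{}" and xs="[1..<m+1]" and ?U'=U0 and ?SOL'=SOL0] assms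
    unfolding step2_def by auto
qed

lemma card_filter_sum:
  assumes "finite I" shows "card {i\<in>I. P i} = (\<Sum>i\<in>I. if P i then 1 else 0)"
  using sum.inter_filter[of I "\<lambda>_. 1::nat" P] assms by simp

lemma count_double:
  fixes m :: nat and S :: "nat \<Rightarrow> 'a set"
  assumes "finite A"
  shows "(\<Sum>i=1..m. card (S i \<inter> A)) = (\<Sum>x\<in>A. card {i\<in>{1..m}. x \<in> S i})"
proof -
  have "(\<Sum>i=1..m. card (S i \<inter> A)) = (\<Sum>i=1..m. \<Sum>x\<in>A. if x \<in> S i then 1 else 0)"
  proof (rule sum.cong[OF refl])
    fix i
    have "S i \<inter> A = {x\<in>A. x \<in> S i}" by auto
    thus "card (S i \<inter> A) = (\<Sum>x\<in>A. if x \<in> S i then 1 else 0)"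
      using assms by (simp add: sum.inter_filter[symmetric])
  qed
  also have "\<dots> = (\<Sum>x\<in>A. \<Sum>i=1..m. if x \<in> S i then 1 else 0)" by (rule sum.swap)
  also have "\<dots> = (\<Sum>x\<in>A. card {i\<in>{1..m}. x \<in> S i})"
    by (intro sum.cong refl card_filter_sum[symmetric]) simp
  finally show ?thesis .
qed

lemma run_iters_fwd:
  "run_iters n m S q oc (Suc j) st = bind_pmf (iter_step n m S q oc st) (run_iters n m S q oc j)"
proof (induction j arbitrary: st)
  case 0
  then show ?case by (simp add: bind_return_pmf bind_return_pmf')
next
  case (Suc j)
  have "run_iters n m S q oc (Suc (Suc j)) st = bind_pmf (run_iters n m S q oc (Suc j) st) (iter_step n m S q oc)"
    by simp
  also have "\<dots> = bind_pmf (iter_step n m S q oc st) (\<lambda>x. bind_pmf (run_iters n m S q oc j x) (iter_step n m S q oc))"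
    unfolding Suc.IH by (simp only: bind_assoc_pmf)
  also have "\<dots> = bind_pmf (iter_step n m S q oc st) (run_iters n m S q oc (Suc j))"
    by (intro bind_pmf_cong refl) simp
  finally show ?case .
qed




definition ww :: "nat \<Rightarrow> (nat \<Rightarrow> nat set) \<Rightarrow> nat \<Rightarrow> real" where
  "ww m S x = real (card {i\<in>{1..m}. x \<in> S i}) / (2 * real m)"

definition Phi :: "nat \<Rightarrow> (nat \<Rightarrow> nat set) \<Rightarrow> nat set \<Rightarrow> real" where
  "Phi m S A = (\<Sum>x\<in>A. ww m S x)"

lemma ww_nonneg: "0 \<le> ww m S x" by (simp add: ww_def)

lemma ww_le: "ww m S x \<le> 1/2"
proof (cases "m = 0")
  case True thus ?thesis by (simp add: ww_def)
next
  case False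
  have "card {i\<in>{1..m}. x \<in> S i} \<le> card {1..m}" by (intro card_mono) auto
  hence "real (card {i\<in>{1..m}. x \<in> S i}) \<le> real m" by simp
  thus ?thesis using False by (simp add: ww_def field_simps)
qed

lemma Phi_nonneg: "0 \<le> Phi m S A" by (simp add: Phi_def sum_nonneg ww_nonneg)

lemma Phi_count:
  assumes "finite A" "m \<ge> 1"
  shows "real (\<Sum>i=1..m. card (S i \<inter> A)) = 2 * real m * Phi m S A"
proof -
  have "real (\<Sum>i=1..m. card (S i \<inter> A)) = (\<Sum>x\<in>A. real (card {i\<in>{1..m}. x \<in> S i}))"
    using count_double[OF assms(1), where m=m and S=S] by simp
  also have "\<dots> = 2 * real m * Phi m S A"
    using assms by (simp add: Phi_def ww_def sum_distrib_left)
  finally show ?thesis .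
qed

lemma Phi_le_thr:
  assumes "finite A" "m \<ge> 1" "\<forall>i\<in>{1..m}. real (card (S i \<inter> A)) \<le> thr"
  shows "Phi m S A \<le> thr / 2"
proof -
  have "real (\<Sum>i=1..m. card (S i \<inter> A)) = (\<Sum>i=1..m. real (card (S i \<inter> A)))" by simp
  also have "\<dots> \<le> (\<Sum>i=1..m. thr)" using assms(3) by (intro sum_mono) auto
  also have "\<dots> = real m * thr" by simp
  finally show ?thesis using Phi_count[OF assms(1,2), of S] assms(2) by simp
qed

lemma iter_step_eq:
  "iter_step n m S q oc (U, SOL, sp) = bind_pmf (sample_set U q) (\<lambda>Us.
     return_pmf (U - (\<Union>i\<in>oc (\<lambda>i. S i \<inter> Us) Us. S i), SOL \<union> oc (\<lambda>i. S i \<inter> Us) Us,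
        max sp (space_iter n m (SOL \<union> oc (\<lambda>i. S i \<inter> Us) Us) (\<lambda>i. S i \<inter> Us))))"
  unfolding iter_step_def Let_def by simp




lemma exp_minus_one_le: "0 \<le> (y::real) \<Longrightarrow> exp y - 1 \<le> y * exp y"
proof -
  assume "0 \<le> y"
  have "1 - y \<le> exp (- y)" using exp_ge_add_one_self[of "-y"] by simp
  hence "(1 - y) * exp y \<le> exp (-y) * exp y" by (intro mult_right_mono) auto
  thus ?thesis by (simp add: exp_minus field_simps)
qed

definition cc :: "real \<Rightarrow> real \<Rightarrow> real \<Rightarrow> real" where
  "cc q thr t = 2 * exp (q * thr) / (exp t - 1)"

context
  fixes n m :: nat and S :: "nat \<Rightarrow> nat set" and q thr t B :: real and oc
  assumes m1: "m \<ge> 1" and Ssub: "\<forall>i\<in>{1..m}. S i \<subseteq> {1..n}"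
    and Sun: "(\<Union>i\<in>{1..m}. S i) = {1..n}" and q0: "0 \<le> q" and q1: "q \<le> 1"
    and orc: "opt_oracle m oc" and t0: "0 < t"
    and Bb: "2 * real n + real m * real (wlen m) + (2 * real m * t + real m) * real (wlen n) \<le> B"
begin

lemma cc_nonneg: "0 \<le> (cc q thr t)"
  using t0 by (simp add: cc_def)

lemma sample_integral_bound:
  assumes fin: "finite U" and thrU: "\<forall>i\<in>{1..m}. real (card (S i \<inter> U)) \<le> thr"
  shows "measure_pmf.expectation (sample_set U q)
     (\<lambda>Us. (1 / (exp t - 1)) * exp (Phi m S Us) + (- (cc q thr t)) * Phi m S Us + ((cc q thr t) * Phi m S U - 1 / (exp t - 1)))
     \<le> (cc q thr t) * Phi m S U"
proof -
  let ?P = "measure_pmf (sample_set U q)"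
  have int: "integrable ?P f" for f :: "nat set \<Rightarrow> real"
    by (rule integrable_measure_pmf_finite[OF sample_set_finite[OF fin]])
  have et: "exp t - 1 > 0" using t0 by simp
  define F where "F = Phi m S U"
  have F0: "0 \<le> F" by (simp add: F_def Phi_nonneg)
  have Fthr: "2 * F \<le> thr" using Phi_le_thr[OF fin m1 thrU] by (simp add: F_def)
  have E1: "measure_pmf.expectation (sample_set U q) (\<lambda>Us. exp (Phi m S Us)) \<le> exp (2 * q * F)"
    unfolding Phi_def F_def by (rule sample_exp[OF fin q0 q1 ww_nonneg ww_le])
  have E2: "measure_pmf.expectation (sample_set U q) (\<lambda>Us. Phi m S Us) = q * F"
    unfolding Phi_def F_def by (rule sample_mean[OF fin q0 q1])
  have "measure_pmf.expectation (sample_set U q)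
     (\<lambda>Us. (1 / (exp t - 1)) * exp (Phi m S Us) + (- (cc q thr t)) * Phi m S Us + ((cc q thr t) * F - 1 / (exp t - 1)))
     = (1 / (exp t - 1)) * measure_pmf.expectation (sample_set U q) (\<lambda>Us. exp (Phi m S Us))
       + (- (cc q thr t)) * (q * F) + ((cc q thr t) * F - 1 / (exp t - 1))"
    using int by (simp add: E2)
  also have "\<dots> \<le> (1 / (exp t - 1)) * exp (2 * q * F) + (- (cc q thr t)) * (q * F) + ((cc q thr t) * F - 1 / (exp t - 1))"
    using E1 et by (intro add_right_mono mult_left_mono) auto
  also have "\<dots> = (exp (2 * q * F) - 1) / (exp t - 1) + (cc q thr t) * F - (cc q thr t) * (q * F)"
    by (simp add: diff_divide_distrib algebra_simps)
  also have "(exp (2 * q * F) - 1) / (exp t - 1) \<le> (cc q thr t) * (q * F)"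
  proof -
    have "exp (2 * q * F) - 1 \<le> (2 * q * F) * exp (2 * q * F)"
      using F0 q0 by (intro exp_minus_one_le) auto
    also have "\<dots> \<le> (2 * q * F) * exp (q * thr)"
    proof -
      have "q * (2 * F) \<le> q * thr" using mult_left_mono[OF Fthr q0] .
      hence "exp (2 * q * F) \<le> exp (q * thr)" by (simp add: mult.assoc mult.left_commute)
      thus ?thesis using F0 q0 by (intro mult_left_mono) auto
    qed
    finally have "(exp (2 * q * F) - 1) / (exp t - 1) \<le> (2 * q * F) * exp (q * thr) / (exp t - 1)"
      using et by (intro divide_right_mono) auto
    also have "\<dots> = (cc q thr t) * (q * F)" by (simp add: cc_def field_simps)
    finally show ?thesis .
  qed
  finally show ?thesis by (simp add: F_def)
qed

lemma space_iter_bound: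
  assumes fin: "finite Us" and SOL': "SOL' \<subseteq> {1..m}" and small: "Phi m S Us < t"
  shows "real (space_iter n m SOL' (\<lambda>i. S i \<inter> Us)) \<le> B"
proof -
  have cS: "card SOL' \<le> m" using card_mono[OF _ SOL'] by simp
  have sum1: "(\<Sum>i=1..m. card (S i \<inter> Us) + 1) = (\<Sum>i=1..m. card (S i \<inter> Us)) + m"
    by (subst sum.distrib) simp
  have rc: "real (\<Sum>i=1..m. card (S i \<inter> Us)) = 2 * real m * Phi m S Us"
    by (rule Phi_count[OF fin m1])
  have "real (\<Sum>i=1..m. card (S i \<inter> Us)) \<le> 2 * real m * t"
    unfolding rc using small m1 by (intro mult_left_mono) auto
  hence A: "real ((\<Sum>i=1..m. card (S i \<inter> Us)) + m) \<le> 2 * real m * t + real m" by simp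
  have "real (space_iter n m SOL' (\<lambda>i. S i \<inter> Us)) =
     2 * real n + real (card SOL') * real (wlen m) + real ((\<Sum>i=1..m. card (S i \<inter> Us)) + m) * real (wlen n)"
    unfolding space_iter_def sum1 by simp
  also have "\<dots> \<le> 2 * real n + real m * real (wlen m) + (2 * real m * t + real m) * real (wlen n)"
    using cS A by (intro add_mono mult_right_mono order.refl) auto
  also have "\<dots> \<le> B" by (rule Bb)
  finally show ?thesis .
qed

lemma run_bound:
  assumes "finite U" "U \<subseteq> {1..n}" "SOL \<subseteq> {1..m}" "\<forall>i\<in>{1..m}. real (card (S i \<inter> U)) \<le> thr"
    "real sp \<le> B"
  shows "emeasure (measure_pmf (run_iters n m S q oc j (U, SOL, sp))) {st. B < real (snd (snd st))}
           \<le> ennreal ((cc q thr t) * Phi m S U)"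
  using assms
proof (induction j arbitrary: U SOL sp)
  case 0
  then show ?case by (simp add: indicator_def)
next
  case (Suc j)
  define T where "T Us = (\<lambda>i. S i \<inter> Us)" for Us
  define g where "g Us = (U - (\<Union>i\<in>oc (T Us) Us. S i), SOL \<union> oc (T Us) Us,
      max sp (space_iter n m (SOL \<union> oc (T Us) Us) (T Us)))" for Us
  define h where "h Us = (1 / (exp t - 1)) * exp (Phi m S Us) + (- (cc q thr t)) * Phi m S Us
      + ((cc q thr t) * Phi m S U - 1 / (exp t - 1))" for Us
  define FF where "FF = {st :: nat set \<times> nat set \<times> nat. B < real (snd (snd st))}"
  have et: "exp t - 1 > 0" using t0 by simp
  have eq: "run_iters n m S q oc (Suc j) (U, SOL, sp) =
      bind_pmf (sample_set U q) (\<lambda>Us. run_iters n m S q oc j (g Us))"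
    by (simp add: run_iters_fwd iter_step_eq bind_assoc_pmf bind_return_pmf g_def T_def del: run_iters.simps(2))
  have pt: "emeasure (measure_pmf (run_iters n m S q oc j (g Us))) FF \<le> ennreal (h Us)"
    if Us: "Us \<in> set_pmf (sample_set U q)" for Us
  proof -
    have UsU: "Us \<subseteq> U" using sample_set_subset[OF Us] .
    have finUs: "finite Us" using UsU Suc.prems(1) finite_subset by blast
    have cov: "covers (T Us) {1..m} Us"
      using UsU Suc.prems(2) Sun unfolding covers_def T_def by blast
    have opt: "is_opt_cover m (T Us) Us (oc (T Us) Us)"
      using orc cov unfolding opt_oracle_def by blast
    have Opt1: "oc (T Us) Us \<subseteq> {1..m}" and Opt2: "Us \<subseteq> (\<Union>i\<in>oc (T Us) Us. S i)"
      using opt unfolding is_opt_cover_def covers_def T_def by auto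
    define U' where "U' = U - (\<Union>i\<in>oc (T Us) Us. S i)"
    have U'sub: "U' \<subseteq> U - Us" using Opt2 by (auto simp: U'_def)
    have finU': "finite U'" using Suc.prems(1) by (simp add: U'_def)
    have PhiU: "Phi m S U = Phi m S (U - Us) + Phi m S Us"
      unfolding Phi_def using sum.subset_diff[OF UsU Suc.prems(1)] by simp
    have PhiU': "Phi m S U' \<le> Phi m S (U - Us)"
      unfolding Phi_def using U'sub Suc.prems(1) by (intro sum_mono2) (auto simp: ww_nonneg)
    have hform: "h Us = (exp (Phi m S Us) - 1) / (exp t - 1) + (cc q thr t) * (Phi m S U - Phi m S Us)"
      unfolding h_def by (simp add: diff_divide_distrib algebra_simps)
    have second: "0 \<le> (cc q thr t) * (Phi m S U - Phi m S Us)"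
      using PhiU Phi_nonneg[of m S "U - Us"] cc_nonneg by simp
    have first: "0 \<le> (exp (Phi m S Us) - 1) / (exp t - 1)"
      using et Phi_nonneg[of m S Us] by simp
    show ?thesis
    proof (cases "t \<le> Phi m S Us")
      case True
      have "exp t - 1 \<le> exp (Phi m S Us) - 1" using True by simp
      hence "1 \<le> (exp (Phi m S Us) - 1) / (exp t - 1)" using et by simp
      hence h1: "1 \<le> h Us" using hform second by linarith
      have "emeasure (measure_pmf (run_iters n m S q oc j (g Us))) FF \<le> 1"
        by (rule measure_pmf.emeasure_le_1)
      also have "\<dots> \<le> ennreal (h Us)" using h1 by simp
      finally show ?thesis .
    next
      case False
      have card': "\<forall>i\<in>{1..m}. real (card (S i \<inter> U')) \<le> thr"
      proof
        fix i assume i: "i \<in> {1..m}"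
        have "card (S i \<inter> U') \<le> card (S i \<inter> U)"
          using Suc.prems(1) by (intro card_mono) (auto simp: U'_def)
        thus "real (card (S i \<inter> U')) \<le> thr" using Suc.prems(4) i by force
      qed
      have SOL': "SOL \<union> oc (T Us) Us \<subseteq> {1..m}" using Suc.prems(3) Opt1 by blast
      have sp': "real (max sp (space_iter n m (SOL \<union> oc (T Us) Us) (T Us))) \<le> B"
        using space_iter_bound[OF finUs SOL'] False Suc.prems(5) unfolding T_def by auto
      have "emeasure (measure_pmf (run_iters n m S q oc j (g Us))) FF \<le> ennreal ((cc q thr t) * Phi m S U')"
        unfolding g_def FF_def U'_def[symmetric]
        by (rule Suc.IH[OF finU' _ SOL' card' sp']) (use Suc.prems(2) in \<open>auto simp: U'_def\<close>)
      also have "\<dots> \<le> ennreal (h Us)"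
      proof (rule ennreal_leI)
        have "(cc q thr t) * Phi m S U' \<le> (cc q thr t) * (Phi m S U - Phi m S Us)"
          using PhiU PhiU' cc_nonneg by (intro mult_left_mono) auto
        thus "(cc q thr t) * Phi m S U' \<le> h Us" using hform first by linarith
      qed
      finally show ?thesis .
    qed
  qed
  have hnn: "0 \<le> h Us" if Us: "Us \<in> set_pmf (sample_set U q)" for Us
  proof -
    have UsU: "Us \<subseteq> U" using sample_set_subset[OF Us] .
    have PhiU: "Phi m S U = Phi m S (U - Us) + Phi m S Us"
      unfolding Phi_def using sum.subset_diff[OF UsU Suc.prems(1)] by simp
    have hform: "h Us = (exp (Phi m S Us) - 1) / (exp t - 1) + (cc q thr t) * (Phi m S U - Phi m S Us)"
      unfolding h_def by (simp add: diff_divide_distrib algebra_simps)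
    have second: "0 \<le> (cc q thr t) * (Phi m S U - Phi m S Us)"
      using PhiU Phi_nonneg[of m S "U - Us"] cc_nonneg by simp
    have first: "0 \<le> (exp (Phi m S Us) - 1) / (exp t - 1)"
      using et Phi_nonneg[of m S Us] by simp
    show ?thesis using hform first second by linarith
  qed
  have "emeasure (measure_pmf (run_iters n m S q oc (Suc j) (U, SOL, sp))) FF
      = (\<integral>\<^sup>+Us. emeasure (measure_pmf (run_iters n m S q oc j (g Us))) FF \<partial>measure_pmf (sample_set U q))"
    unfolding eq by simp
  also have "\<dots> \<le> (\<integral>\<^sup>+Us. ennreal (h Us) \<partial>measure_pmf (sample_set U q))"
    by (intro nn_integral_mono_AE AE_pmfI pt)
  also have "\<dots> = ennreal (measure_pmf.expectation (sample_set U q) h)"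
  proof (rule nn_integral_eq_integral)
    show "integrable (measure_pmf (sample_set U q)) h"
      by (rule integrable_measure_pmf_finite[OF sample_set_finite[OF Suc.prems(1)]])
    show "AE x in measure_pmf (sample_set U q). 0 \<le> h x"
      by (intro AE_pmfI hnn)
  qed
  also have "\<dots> \<le> ennreal ((cc q thr t) * Phi m S U)"
    unfolding h_def by (intro ennreal_leI sample_integral_bound Suc.prems)
  finally show ?case unfolding FF_def .
qed

end



lemma wlen_le:
  assumes "real k + 1 \<le> N"
  shows "real (wlen k) \<le> log 2 N + 1"
proof -
  have y0: "0 \<le> log 2 (real k + 1)" by simp
  have "real (wlen k) = real_of_int \<lceil>log 2 (real k + 1)\<rceil>"
    unfolding wlen_def using y0 by simp
  also have "\<dots> \<le> log 2 (real k + 1) + 1" by linarith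
  also have "log 2 (real k + 1) \<le> log 2 N" using assms by simp
  finally show ?thesis by simp
qed

lemma ln_le_log2: "1 \<le> (x::real) \<Longrightarrow> ln x \<le> log 2 x"
proof -
  assume x: "1 \<le> x"
  have l0: "0 \<le> ln x" using x by simp
  have l2: "0 < ln (2::real)" "ln (2::real) < 1" using ln_2_less_1 by auto
  have "ln x * ln 2 \<le> ln x * 1" using l0 l2 by (intro mult_left_mono) auto
  thus ?thesis unfolding log_def using l2 by (simp add: field_simps)
qed

lemma final_arith:
  fixes n m :: nat and a e L t M :: real
  assumes n1: "n \<ge> 1" and m2: "m \<ge> 2" and a1: "1 \<le> a" and e0: "0 < e" and e1: "e \<le> 1"
    and L: "L = log 2 (real n + real m)"
    and M0: "0 \<le> M" and M: "M \<le> 16 * log 2 (real m) * a / e"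
    and t: "t = M + ln (2 * real n * (real m)^2 + 1)"
  shows "2 * real n + real m * real (wlen m) + (2 * real m * t + real m) * real (wlen n)
         \<le> 100 * L ^ 2 * (real m * a / e + real n)"
proof -
  define X where "X = real m * a / e + real n"
  have L1: "1 \<le> L" using n1 m2 unfolding L by simp
  have ae: "1 \<le> a / e" using a1 e0 e1 by (simp add: field_simps)
  have mX: "real m \<le> real m * (a / e)" using mult_left_mono[OF ae, of "real m"] by simp
  have mX': "real m * (a / e) \<le> X" by (simp add: X_def)
  have nX: "real n \<le> X" using e0 a1 by (simp add: X_def)
  have "real (wlen m) \<le> L + 1"
    using wlen_le[of m "real n + real m"] n1 unfolding L by simp
  hence wm: "real (wlen m) \<le> 2 * L" using L1 by linarith
  have "real (wlen n) \<le> L + 1"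
    using wlen_le[of n "real n + real m"] m2 unfolding L by simp
  hence wn: "real (wlen n) \<le> 2 * L" using L1 by linarith
  have logm: "log 2 (real m) \<le> L" unfolding L using m2 by simp
  have cube: "2 * real n * (real m)^2 + 1 \<le> (real n + real m) ^ 3"
  proof -
    have "(real n + real m) ^ 3 = real n ^ 3 + 3 * real n ^ 2 * real m + 3 * real n * (real m)^2 + (real m)^3"
      by (simp add: power3_eq_cube power2_eq_square algebra_simps)
    moreover have "1 \<le> real n ^ 3" using n1 by simp
    moreover have "0 \<le> 3 * real n ^ 2 * real m + real n * (real m)^2 + (real m)^3" by simp
    ultimately show ?thesis by linarith
  qed
  have lnb: "ln (2 * real n * (real m)^2 + 1) \<le> 3 * L"
  proof -
    have "ln (2 * real n * (real m)^2 + 1) \<le> ln ((real n + real m) ^ 3)"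
    proof (subst ln_le_cancel_iff)
      show "0 < 2 * real n * (real m)\<^sup>2 + 1" by (simp add: add_nonneg_pos)
      show "0 < (real n + real m) ^ 3" using n1 by simp
    qed (rule cube)
    also have "\<dots> = 3 * ln (real n + real m)" using n1 by (simp add: ln_realpow)
    also have "\<dots> \<le> 3 * L" unfolding L using ln_le_log2[of "real n + real m"] n1 by simp
    finally show ?thesis .
  qed
  have Mb: "M \<le> 16 * L * (a / e)"
  proof -
    have "16 * log 2 (real m) * a / e = 16 * log 2 (real m) * (a / e)" by simp
    also have "\<dots> \<le> 16 * L * (a / e)" using logm ae by (intro mult_right_mono) auto
    finally show ?thesis using M by simp
  qed
  have tb: "t \<le> 19 * L * (a / e)"
  proof -
    have "3 * L * 1 \<le> 3 * L * (a / e)" using ae L1 by (intro mult_left_mono) auto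
    thus ?thesis using t Mb lnb by simp
  qed
  have t0: "0 \<le> t" unfolding t using M0 by (intro add_nonneg_nonneg ln_ge_zero) auto
  have A1: "2 * real n \<le> 2 * L^2 * X"
  proof -
    have "1 \<le> L^2" using L1 by simp
    thus ?thesis using nX mult_mono[of 1 "L^2" "real n" X] by simp
  qed
  have A2: "real m * real (wlen m) \<le> 2 * L^2 * X"
  proof -
    have "real m * real (wlen m) \<le> X * (2 * L)" using mX mX' wm by (intro mult_mono) auto
    also have "\<dots> \<le> X * (2 * L^2)" using L1 nX by (intro mult_left_mono) (auto simp: power2_eq_square)
    finally show ?thesis by (simp add: algebra_simps)
  qed
  have A3: "2 * real m * t + real m \<le> 39 * L * X"
  proof -
    have "2 * real m * t \<le> 2 * real m * (19 * L * (a / e))" using tb by (intro mult_left_mono) auto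
    also have "\<dots> = 38 * L * (real m * (a / e))" by simp
    also have "\<dots> \<le> 38 * L * X" using mX' L1 by (intro mult_left_mono) auto
    finally have "2 * real m * t \<le> 38 * L * X" .
    moreover have "real m \<le> L * X" using mX mX' L1 mult_mono[of 1 L "real m" X] by simp
    ultimately show ?thesis by (simp add: algebra_simps)
  qed
  have A4: "(2 * real m * t + real m) * real (wlen n) \<le> 78 * L^2 * X"
  proof -
    have "(2 * real m * t + real m) * real (wlen n) \<le> (39 * L * X) * (2 * L)"
      using A3 wn t0 L1 nX by (intro mult_mono) auto
    thus ?thesis by (simp add: power2_eq_square algebra_simps)
  qed
  have "0 \<le> L^2 * X" using nX by simp
  hence "2 * real n + real m * real (wlen m) + (2 * real m * t + real m) * real (wlen n)
         \<le> 100 * L ^ 2 * X" using A1 A2 A4 by (simp only: mult.assoc)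
  thus ?thesis unfolding X_def .
qed




theorem lemma3p6:
  shows "\<exists>C::real. \<exists>k::nat. C > 0 \<and>
    (\<forall>(n::nat) (m::nat) (S::nat \<Rightarrow> nat set) (\<alpha>::nat) (\<epsilon>::real) (optt::real) oc.
       n \<ge> 1 \<longrightarrow> (\<forall>i\<in>{1..m}. S i \<subseteq> {1..n}) \<longrightarrow> (\<Union>i\<in>{1..m}. S i) = {1..n} \<longrightarrow>
       \<alpha> \<ge> 1 \<longrightarrow> 0 < \<epsilon> \<longrightarrow> \<epsilon> \<le> 1 \<longrightarrow>
       real (opt_cover n m S) \<le> optt \<longrightarrow> optt \<le> (1 + \<epsilon>) * real (opt_cover n m S) \<longrightarrow>
       opt_oracle m oc \<longrightarrow>
       measure_pmf.prob (alg1_space n m S \<alpha> \<epsilon> optt oc)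
         {s. real s \<le> C * (log 2 (real n + real m)) ^ k *
                        (real m * real n powr (1 / real \<alpha>) / \<epsilon> + real n)}
       \<ge> 1 - 1 / (real m)^2)"
proof (intro exI[of _ "100::real"] exI[of _ "2::nat"] conjI allI impI)
  fix n m :: nat and S :: "nat \<Rightarrow> nat set" and \<alpha> :: nat and \<epsilon> optt :: real and oc
  assume n1: "n \<ge> 1" and Ssub: "\<forall>i\<in>{1..m}. S i \<subseteq> {1..n}" and Sun: "(\<Union>i\<in>{1..m}. S i) = {1..n}"
    and a1: "\<alpha> \<ge> 1" and e0: "0 < \<epsilon>" and e1: "\<epsilon> \<le> 1" and orc: "opt_oracle m oc"
  define Bound where "Bound = 100 * (log 2 (real n + real m)) ^ 2 *
                        (real m * real n powr (1 / real \<alpha>) / \<epsilon> + real n)"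
  have m0: "m \<noteq> 0"
  proof
    assume "m = 0"
    hence "{1..n} = ({}::nat set)" using Sun by simp
    thus False using n1 by simp
  qed
  show "1 - 1 / (real m)^2 \<le> measure_pmf.prob (alg1_space n m S \<alpha> \<epsilon> optt oc) {s. real s \<le> Bound}"
  proof (cases "m = 1")
    case True
    thus ?thesis by simp
  next
    case False
    hence m2: "m \<ge> 2" using m0 by simp
    define thr0 where "thr0 = real n / (\<epsilon> * optt)"
    obtain U0 SOL0 where s2: "step2 n m S thr0 = (U0, SOL0)" by (cases "step2 n m S thr0") auto
    define p where "p = 16 * optt * log 2 (real m) / (real n powr (1 - 1 / real \<alpha>))"
    define q where "q = min 1 (max 0 p)"
    define thr where "thr = max 0 thr0"
    define M where "M = q * thr"
    define t where "t = M + ln (2 * real n * (real m)^2 + 1)"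
    define B where "B = 2 * real n + real m * real (wlen m) + (2 * real m * t + real m) * real (wlen n)"
    define FF where "FF = {st :: nat set \<times> nat set \<times> nat. B < real (snd (snd st))}"
    define R where "R = run_iters n m S q oc \<alpha> (U0, SOL0, space_step2 n m SOL0)"
    have inv: "U0 \<subseteq> {1..n}" "SOL0 \<subseteq> {1..m}" "\<forall>i\<in>{1..m}. real (card (S i \<inter> U0)) \<le> thr"
      using step2_inv[OF s2] by (auto simp: thr_def)
    have finU0: "finite U0" using inv(1) finite_subset by blast
    have alg: "alg1_space n m S \<alpha> \<epsilon> optt oc = map_pmf (\<lambda>(U, SOL, sp). sp) R"
      using s2 by (simp add: alg1_space_def R_def Let_def q_def p_def thr0_def)
    have q0: "0 \<le> q" and q1: "q \<le> 1" by (auto simp: q_def)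
    have M0: "0 \<le> M" by (simp add: M_def thr_def q0)
    have Mb: "M \<le> 16 * log 2 (real m) * real n powr (1 / real \<alpha>) / \<epsilon>"
    proof (cases "thr0 \<le> 0")
      case True
      hence "M = 0" by (simp add: M_def thr_def)
      thus ?thesis using m2 e0 by simp
    next
      case False
      hence thr: "thr = thr0" and th0: "0 < thr0" by (auto simp: thr_def)
      have "0 < \<epsilon> * optt" using th0 n1 unfolding thr0_def by (simp add: zero_less_divide_iff)
      hence o0: "0 < optt" using e0 by (simp add: zero_less_mult_iff)
      have pw: "0 < real n powr (1 - 1 / real \<alpha>)" using n1 by simp
      have p0: "0 \<le> p" unfolding p_def using o0 m2 pw by simp
      have "q \<le> p" using p0 by (simp add: q_def)
      hence "M \<le> p * thr0" unfolding M_def thr using th0 by (intro mult_right_mono) auto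
      also have "p * thr0 = 16 * log 2 (real m) * (real n / real n powr (1 - 1 / real \<alpha>)) / \<epsilon>"
        unfolding p_def thr0_def using o0 e0 by (simp add: field_simps)
      also have "real n / real n powr (1 - 1 / real \<alpha>) = real n powr (1 / real \<alpha>)"
      proof -
        have "real n = real n powr (1 - 1 / real \<alpha>) * real n powr (1 / real \<alpha>)"
          using n1 by (simp add: powr_add[symmetric])
        thus ?thesis using pw by (simp add: field_simps)
      qed
      finally show ?thesis by simp
    qed
    have t0: "0 < t"
    proof -
      have "0 < ln (2 * real n * (real m)^2 + 1)" using n1 m2 by (intro ln_gt_zero) auto
      thus ?thesis using M0 by (simp add: t_def)
    qed
    have Bb: "2 * real n + real m * real (wlen m) + (2 * real m * t + real m) * real (wlen n) \<le> B"
      by (simp add: B_def)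
    have sp0: "real (space_step2 n m SOL0) \<le> B"
    proof -
      have "card SOL0 \<le> m" using card_mono[OF _ inv(2)] by simp
      hence "real (card SOL0) * real (wlen m) \<le> real m * real (wlen m)" by (intro mult_right_mono) auto
      moreover have "0 \<le> (2 * real m * t + real m) * real (wlen n)" using t0 by simp
      ultimately show ?thesis unfolding B_def space_step2_def by simp
    qed
    have RB: "emeasure (measure_pmf R) FF \<le> ennreal (cc q thr t * Phi m S U0)"
      unfolding R_def FF_def
      by (rule run_bound[where n=n and m=m and S=S and q=q and thr=thr and t=t and B=B and oc=oc])
         (use m2 Ssub Sun q0 q1 orc t0 Bb finU0 inv sp0 in auto)
    have ccb: "cc q thr t * Phi m S U0 \<le> 1 / (real m)^2"
    proof -
      define K where "K = 2 * real n * (real m)^2"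
      have K0: "0 < K" using n1 m2 by (simp add: K_def)
      have eM: "1 \<le> exp M" using M0 by simp
      have KK: "2 * real n * (real m)^2 + 1 = K + 1" by (simp add: K_def)
      have "exp t = exp M * (K + 1)" unfolding t_def KK using K0 by (simp add: exp_add)
      hence et: "exp M * K \<le> exp t - 1" using eM by (simp add: algebra_simps)
      have PhiU0: "Phi m S U0 \<le> real n / 2"
      proof -
        have "Phi m S U0 \<le> (\<Sum>x\<in>U0. 1/2)" unfolding Phi_def by (intro sum_mono ww_le)
        also have "\<dots> = real (card U0) / 2" by simp
        also have "card U0 \<le> n" using card_mono[OF _ inv(1)] by simp
        hence "real (card U0) / 2 \<le> real n / 2" by simp
        finally show ?thesis .
      qed
      have "cc q thr t * Phi m S U0 \<le> (2 * exp M / (exp M * K)) * (real n / 2)"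
      proof (intro mult_mono)
        show "cc q thr t \<le> 2 * exp M / (exp M * K)"
        proof -
          have "cc q thr t = 2 * exp M / (exp t - 1)" by (simp add: cc_def M_def)
          moreover have "0 < exp t - 1" using t0 by simp
          moreover have "0 < exp M * K" using K0 by simp
          ultimately show ?thesis using et by (simp only:) (intro divide_left_mono, auto)
        qed
      qed (use PhiU0 Phi_nonneg K0 in auto)
      also have "\<dots> = 1 / (2 * (real m)^2)" using n1 m2 by (simp add: K_def field_simps)
      also have "\<dots> \<le> 1 / (real m)^2" using m2 by (simp add: field_simps)
      finally show ?thesis .
    qed
    have PF: "measure_pmf.prob R FF \<le> 1 / (real m)^2"
    proof -
      have "ennreal (measure_pmf.prob R FF) \<le> ennreal (1 / (real m)^2)"
        using RB ccb by (metis measure_pmf.emeasure_eq_measure order.trans ennreal_leI)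
      thus ?thesis by (simp add: ennreal_le_iff)
    qed
    have BB: "B \<le> Bound"
      unfolding B_def Bound_def
      by (rule final_arith[OF n1 m2 _ e0 e1 refl M0 Mb t_def]) (use n1 in \<open>auto intro!: ge_one_powr_ge_zero\<close>)
    have "1 - 1 / (real m)^2 \<le> 1 - measure_pmf.prob R FF" using PF by simp
    also have "\<dots> = measure_pmf.prob R (UNIV - FF)"
      using measure_pmf.prob_compl[of FF R] by simp
    also have "\<dots> \<le> measure_pmf.prob R ((\<lambda>(U, SOL, sp). sp) -` {s. real s \<le> Bound})"
      using BB by (intro measure_pmf.finite_measure_mono) (auto simp: FF_def)
    also have "\<dots> = measure_pmf.prob (alg1_space n m S \<alpha> \<epsilon> optt oc) {s. real s \<le> Bound}"
      by (simp add: alg)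
    finally show ?thesis .
  qed
qed simp


end
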